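(* Let $a=1$. Define $\boldsymbol{\alpha}_0=\boldsymbol{\beta}_0=1$ and, for $n\ge1$, \[ \boldsymbol{\alpha}_n(1,k)=(-1)^n(q^{-n}+q^{n}),\qquad \boldsymbol{\beta}_n(1,k)=(-1)^n\frac{(k^2;q^2)_{n}(1+kq^{2n})}{(1+k)q^n(q^2;q^2)_n}. \] Then $(\boldsymbol{\alpha}_n(1,k),\boldsymbol{\beta}_n(1,k))$ is a WP-Bailey pair relative to $a=1$.
   Context: Notation: $(x;q)_n=\prod_{i=0}^{n-1}(1-xq^i)$. A pair of sequences $(\boldsymbol{\alpha}_n(a,k,q),\boldsymbol{\beta}_n(a,k,q))_{n\ge0}$ is a WP-Bailey pair (relative to $a$, with parameter $k$) if $\boldsymbol{\alpha}_0=1$ and for all $n\ge0$ \[\boldsymbol{\beta}_n=\sum_{j=0}^n\frac{(k/a;q)_{n-j}(k;q)_{n+j}}{(q;q)_{n-j}(aq;q)_{n+j}}\boldsymbol{\alpha}_j.\] *)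

theory Defs
  imports Complex_Main
begin

definition qpoch :: "'a::comm_ring_1 \<Rightarrow> 'a \<Rightarrow> nat \<Rightarrow> 'a" where
  "qpoch x q n = (\<Prod>i<n. 1 - x * q ^ i)"

definition WP_Bailey_pair ::
  "'a::field \<Rightarrow> 'a \<Rightarrow> 'a \<Rightarrow> (nat \<Rightarrow> 'a) \<Rightarrow> (nat \<Rightarrow> 'a) \<Rightarrow> bool" where
  "WP_Bailey_pair a k q \<alpha> \<beta> \<longleftrightarrow>
     \<alpha> 0 = 1 \<and>
     (\<forall>n. \<beta> n = (\<Sum>j=0..n.
        (qpoch (k / a) q (n - j) * qpoch k q (n + j)) /
        (qpoch q q (n - j) * qpoch (a * q) q (n + j)) * \<alpha> j))"

end

theory Submission imports Defs "HOL-Computational_Algebra.Formal_Power_Series" begin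
unbundle fps_syntax

definition sc :: "'a::comm_ring_1 \<Rightarrow> 'a fps \<Rightarrow> 'a fps" where
  "sc c F = Abs_fps (\<lambda>n. c^n * F $ n)"

lemma sc_nth[simp]: "sc c F  $  n = c^n * F $ n" by (simp add: sc_def)

lemma sc_mult: "sc c (F*G) = sc c F * sc c G"
proof (rule fps_ext)
  fix n
  have "c^n * (\<Sum>i=0..n. F $ i * G $ (n-i)) = (\<Sum>i=0..n. (c^i * F $ i) * (c^(n-i) * G $ (n-i)))"
    unfolding sum_distrib_left
    by (rule sum.cong) (auto simp: power_add[symmetric] algebra_simps)
  then show "sc c (F*G)  $  n = (sc c F * sc c G)  $  n" by (simp add: fps_mult_nth)
qed

lemma sc_add: "sc c (F+G) = sc c F + sc c G" by (rule fps_ext) (simp add: algebra_simps)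
lemma sc_diff: "sc c (F-G) = sc c F - sc c G" by (rule fps_ext) (simp add: algebra_simps)
lemma sc_one[simp]: "sc c 1 = 1" by (rule fps_ext) simp
lemma sc_const[simp]: "sc c (fps_const a) = fps_const a" by (rule fps_ext) simp
lemma sc_X[simp]: "sc c fps_X = fps_const c * fps_X" by (rule fps_ext) (case_tac "n=1"; simp)
lemma sc_sc: "sc c (sc d F) = sc (c*d) F" by (rule fps_ext) (simp add: power_mult_distrib)


lemma qpoch_Suc: "qpoch x q (Suc n) = qpoch x q n * (1 - x * q^n)"
  by (simp add: qpoch_def)
lemma qpoch_0[simp]: "qpoch x q 0 = 1" by (simp add: qpoch_def)

lemma qpoch_qq_nz:
  fixes q :: complex
  assumes "\<And>m::nat. m \<ge> 1 \<Longrightarrow> q ^ m \<noteq> 1"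
  shows "qpoch q q n \<noteq> 0"
proof (induction n)
  case (Suc n)
  have "q^(Suc n) \<noteq> 1" using assms[of "Suc n"] by simp
  then have "1 - q * q^n \<noteq> 0" by simp
  then show ?case using Suc by (simp add: qpoch_Suc)
qed simp

lemma qpoch_q2_nz:
  fixes q :: complex
  assumes "\<And>m::nat. m \<ge> 1 \<Longrightarrow> q ^ m \<noteq> 1"
  shows "qpoch (q^2) (q^2) n \<noteq> 0"
proof (induction n)
  case (Suc n)
  have "q^(2*n+2) \<noteq> 1" using assms[of "2*n+2"] by simp
  moreover have "q^2 * (q^2)^n = q^(2*n+2)" by (metis power_add power_mult mult.commute)
  ultimately have "1 - q^2 * (q^2)^n \<noteq> 0" by simp
  then show ?case using Suc by (simp add: qpoch_Suc)
qed simp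

definition LL :: "complex \<Rightarrow> complex \<Rightarrow> complex fps \<Rightarrow> complex fps" where
  "LL k q F = (1 - fps_const (k^2) * fps_X^2) * sc q F"
definition RR :: "complex \<Rightarrow> complex fps \<Rightarrow> complex fps" where
  "RR q F = (1 + fps_const q * fps_X) * (1 - fps_X) * F"

lemma uniq:
  fixes q k :: complex
  assumes qm: "\<And>m::nat. m \<ge> 1 \<Longrightarrow> q ^ m \<noteq> 1"
    and F: "LL k q F = RR q F" and H: "LL k q H = RR q H" and z: "F $ 0 = H $ 0"
  shows "F = H"
proof -
  define D where "D = F - H"
  have "LL k q D = LL k q F - LL k q H" "RR q D = RR q F - RR q H"
    unfolding D_def LL_def RR_def sc_diff by (simp_all add: right_diff_distrib)
  then have e: "LL k q D = RR q D" using F H by simp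
  have L: "LL k q D = sc q D - fps_const (k^2) * (fps_X^2 * sc q D)"
    unfolding LL_def by (simp add: algebra_simps)
  have R: "RR q D = D + fps_const q * (fps_X * D) - fps_X * D - fps_const q * (fps_X^2 * D)"
    unfolding RR_def by (simp add: algebra_simps power2_eq_square)
  have "D $ m = 0" for m
  proof (induction m rule: less_induct)
    case (less m)
    show ?case
    proof (cases m)
      case 0 then show ?thesis using z by (simp add: D_def)
    next
      case (Suc j)
      have h2: "D $ (Suc j - 2) = 0" using less Suc by simp
      have h1: "D $ j = 0" using less Suc by simp
      have "(LL k q D) $ m = (RR q D) $ m" using e by simp
      moreover have "(LL k q D) $ m = q^m * D $ m" unfolding L using Suc h2
        by (simp add: fps_X_power_mult_nth)
      moreover have "(RR q D) $ m = D $ m" unfolding R using Suc h1 h2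
        by (simp add: fps_X_power_mult_nth fps_X_mult_nth)
      ultimately have "q^m * D $ m = D $ m" by simp
      moreover have "q^m \<noteq> 1" using qm[of m] Suc by simp
      ultimately show ?thesis
        by (metis mult_cancel_right2)
    qed
  qed
  then show ?thesis unfolding D_def by (simp add: fps_eq_iff)
qed


definition cc :: "complex \<Rightarrow> complex \<Rightarrow> nat \<Rightarrow> complex" where
  "cc k q i = qpoch k q i / qpoch q q i"
definition AA :: "complex \<Rightarrow> complex \<Rightarrow> complex fps" where
  "AA k q = Abs_fps (cc k q)"

lemma A_eq:
  fixes q k :: complex
  assumes qm: "\<And>m::nat. m \<ge> 1 \<Longrightarrow> q ^ m \<noteq> 1"
  shows "(1 - fps_const k * fps_X) * sc q (AA k q) = (1 - fps_X) * AA k q"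
proof (rule fps_ext)
  fix m
  show "((1 - fps_const k * fps_X) * sc q (AA k q)) $ m = ((1 - fps_X) * AA k q) $ m"
  proof (cases m)
    case 0 then show ?thesis by (simp add: algebra_simps AA_def)
  next
    case (Suc j)
    have nz1: "qpoch q q j \<noteq> 0" "qpoch q q (Suc j) \<noteq> 0" using qpoch_qq_nz[OF qm] by auto
    have "cc k q (Suc j) * (1 - q^Suc j) = cc k q j * (1 - k * q^j)"
      using nz1 unfolding cc_def qpoch_Suc by (simp add: field_simps)
    then show ?thesis using Suc
      by (simp add: algebra_simps AA_def fps_X_mult_nth mult.assoc)
  qed
qed

definition PP :: "complex \<Rightarrow> complex \<Rightarrow> complex fps" where
  "PP k q = (1 + fps_const k * fps_X) * (sc (-q) (AA k q) * AA k q)"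

lemma P_eq:
  fixes q k :: complex
  assumes qm: "\<And>m::nat. m \<ge> 1 \<Longrightarrow> q ^ m \<noteq> 1"
  shows "LL k q (PP k q) = RR q (PP k q)"
proof -
  define A where "A = AA k q"
  define B where "B = sc (-q) A"
  have h1: "(1 - fps_const k * fps_X) * sc q A = (1 - fps_X) * A"
    using A_eq[OF qm] by (simp add: A_def)
  have "sc (-q) ((1 - fps_const k * fps_X) * sc q A) = sc (-q) ((1 - fps_X) * A)"
    using h1 by simp
  then have h2: "(1 + fps_const k * fps_const q * fps_X) * sc q B = (1 + fps_const q * fps_X) * B"
    unfolding sc_mult sc_diff B_def sc_sc
    by (simp add: mult.commute fps_const_neg[symmetric] algebra_simps del: fps_const_neg)
  have "LL k q (PP k q) = (1 + fps_const k * fps_X) * ((1 + fps_const k * fps_const q * fps_X) * sc q B) * ((1 - fps_const k * fps_X) * sc q A)"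
  proof -
    define K where "K = fps_const k"
    define Qc where "Qc = fps_const q"
    have c: "fps_const (k^2) = K*K" "fps_const k * fps_const q = K * Qc"
      unfolding K_def Qc_def by (simp_all add: power2_eq_square)
    show ?thesis
      unfolding LL_def PP_def A_def[symmetric] B_def[symmetric] sc_mult sc_add sc_X sc_one sc_const c
      unfolding K_def[symmetric] Qc_def[symmetric]
      by (simp add: power2_eq_square algebra_simps)
  qed
  also have "\<dots> = (1 + fps_const k * fps_X) * ((1 + fps_const q * fps_X) * B) * ((1 - fps_X) * A)"
    by (simp only: h1 h2)
  also have "\<dots> = RR q (PP k q)"
    unfolding RR_def PP_def A_def[symmetric] B_def[symmetric] by (simp add: algebra_simps)
  finally show ?thesis .
qed


definition gg :: "complex \<Rightarrow> complex \<Rightarrow> nat \<Rightarrow> complex" where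
  "gg k q m = (if even m then qpoch (k^2) (q^2) (m div 2) / qpoch (q^2) (q^2) (m div 2) else 0)"

lemma gg_even: "gg k q (2*i) = qpoch (k^2) (q^2) i / qpoch (q^2) (q^2) i"
  by (simp add: gg_def)
lemma gg_odd: "gg k q (Suc (2*i)) = 0"
  by (simp add: gg_def)
lemma gg_0[simp]: "gg k q 0 = 1" by (simp add: gg_def)

lemma gg_rec:
  fixes q k :: complex
  assumes qm: "\<And>m::nat. m \<ge> 1 \<Longrightarrow> q ^ m \<noteq> 1"
  shows "gg k q (2*i+2) * (1 - q^(2*i+2)) = gg k q (2*i) * (1 - k^2 * q^(2*i))"
proof -
  have e: "2*i+2 = 2 * Suc i" by simp
  have nz: "qpoch (q^2) (q^2) i \<noteq> 0" "qpoch (q^2) (q^2) (Suc i) \<noteq> 0"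
    using qpoch_q2_nz[OF qm] by auto
  have p: "(q^2)^i = q^(2*i)" "q^2 * q^(2*i) = q^(2*i+2)"
    by (rule power_mult[symmetric], metis power_add mult.commute)
  show ?thesis unfolding e gg_even using nz unfolding qpoch_Suc p
    by (simp add: field_simps p)
qed

definition GG :: "complex \<Rightarrow> complex \<Rightarrow> complex fps" where
  "GG k q = Abs_fps (gg k q)"

lemma G_eq:
  fixes q k :: complex
  assumes qm: "\<And>m::nat. m \<ge> 1 \<Longrightarrow> q ^ m \<noteq> 1"
  shows "(1 - fps_const (k^2) * fps_X^2) * sc q (GG k q) = (1 - fps_X^2) * GG k q"
proof (rule fps_ext)
  fix m
  have L: "((1 - fps_const (k^2) * fps_X^2) * sc q (GG k q)) $ m
      = q^m * gg k q m - (if m < 2 then 0 else k^2 * q^(m-2) * gg k q (m-2))"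
    by (simp add: algebra_simps GG_def fps_X_power_mult_nth mult.assoc)
  have R: "((1 - fps_X^2) * GG k q) $ m = gg k q m - (if m < 2 then 0 else gg k q (m-2))"
    by (simp add: left_diff_distrib GG_def fps_X_power_mult_nth)
  have "q^m * gg k q m - (if m < 2 then 0 else k^2 * q^(m-2) * gg k q (m-2))
     = gg k q m - (if m < 2 then 0 else gg k q (m-2))"
  proof (cases "m < 2")
    case True
    then have "m = 0 \<or> m = Suc (2*0)" by auto
    then show ?thesis using True gg_odd[of k q 0] by auto
  next
    case False
    then obtain j where j: "m = j + 2" by (metis add.commute le_Suc_ex not_less)
    show ?thesis
    proof (cases "even j")
      case True
      then obtain i where i: "j = 2*i" by auto
      show ?thesis using gg_rec[OF qm, of k i] False unfolding j i
        by (simp add: algebra_simps)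
    next
      case False
      then obtain i where i: "j = Suc (2*i)" by (metis oddE Suc_eq_plus1)
      have "j + 2 = Suc (2 * Suc i)" unfolding i by simp
      then show ?thesis unfolding j using gg_odd[of k q i] gg_odd[of k q "Suc i"] i by simp
    qed
  qed
  then show "((1 - fps_const (k^2) * fps_X^2) * sc q (GG k q)) $ m = ((1 - fps_X^2) * GG k q) $ m"
    using L R by simp
qed


lemma Q_eq:
  fixes q k :: complex
  assumes qm: "\<And>m::nat. m \<ge> 1 \<Longrightarrow> q ^ m \<noteq> 1"
  shows "LL k q ((1 + fps_X) * GG k q) = RR q ((1 + fps_X) * GG k q)"
proof -
  define G where "G = GG k q"
  have h: "(1 - fps_const (k^2) * fps_X^2) * sc q G = (1 - fps_X^2) * G"
    using G_eq[OF qm] by (simp add: G_def)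
  have "LL k q ((1 + fps_X) * G) = (1 + fps_const q * fps_X) * ((1 - fps_const (k^2) * fps_X^2) * sc q G)"
    unfolding LL_def sc_mult sc_add by (simp add: algebra_simps)
  also have "\<dots> = (1 + fps_const q * fps_X) * ((1 - fps_X^2) * G)" by (simp only: h)
  also have "\<dots> = RR q ((1 + fps_X) * G)" unfolding RR_def by (simp add: algebra_simps power2_eq_square)
  finally show ?thesis by (simp add: G_def)
qed

lemma aux1: fixes k b x :: complex assumes "1 + k \<noteq> 0"
  shows "b*(1 - k^2*x)/(1+k) + k*(b*(1+k*x)/(1+k)) = b"
proof -
  have "b*(1 - k^2*x)/(1+k) + k*(b*(1+k*x)/(1+k)) = (b*(1 - k^2*x) + k*(b*(1+k*x)))/(1+k)"
    by (simp add: add_divide_distrib)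
  also have "b*(1 - k^2*x) + k*(b*(1+k*x)) = b*(1+k)" by (simp add: algebra_simps power2_eq_square)
  finally show ?thesis using assms by simp
qed
lemma aux2: fixes k g0 g2 x y :: complex assumes "1 + k \<noteq> 0" and "g2*(1-y) = g0*(1-k^2*x)"
  shows "g2 = g2*(1+k*y)/(1+k) + k*(g0*(1-k^2*x)/(1+k))"
proof -
  have "g2*(1+k*y)/(1+k) + k*(g0*(1-k^2*x)/(1+k)) = (g2*(1+k*y) + k*(g2*(1-y)))/(1+k)"
    using assms(2) by (simp add: add_divide_distrib)
  also have "g2*(1+k*y) + k*(g2*(1-y)) = g2*(1+k)" by (simp add: algebra_simps)
  finally show ?thesis using assms by simp
qed

definition rr :: "complex \<Rightarrow> complex \<Rightarrow> nat \<Rightarrow> complex" where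
  "rr k q m = (if even m then gg k q m * (1 + k * q^m) / (1 + k)
     else gg k q (m - 1) * (1 - k^2 * q^(m-1)) / (1 + k))"

lemma rr_even: "rr k q (2*i) = gg k q (2*i) * (1 + k * q^(2*i)) / (1 + k)"
  by (simp add: rr_def)
lemma rr_odd: "rr k q (Suc (2*i)) = gg k q (2*i) * (1 - k^2 * q^(2*i)) / (1 + k)"
  by (simp add: rr_def)

lemma QR:
  fixes q k :: complex
  assumes qm: "\<And>m::nat. m \<ge> 1 \<Longrightarrow> q ^ m \<noteq> 1" and k: "k \<noteq> -1"
  shows "(1 + fps_X) * GG k q = (1 + fps_const k * fps_X) * Abs_fps (rr k q)"
proof (rule fps_ext)
  fix m
  have k1: "1 + k \<noteq> 0" using k by (metis add.commute add_eq_0_iff)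
  show "((1 + fps_X) * GG k q) $ m = ((1 + fps_const k * fps_X) * Abs_fps (rr k q)) $ m"
  proof (cases m)
    case 0 then show ?thesis using k1 by (simp add: GG_def rr_def)
  next
    case (Suc j)
    have L: "((1 + fps_X) * GG k q) $ m = gg k q (Suc j) + gg k q j"
      using Suc by (simp add: distrib_right GG_def fps_X_mult_nth)
    have R: "((1 + fps_const k * fps_X) * Abs_fps (rr k q)) $ m = rr k q (Suc j) + k * rr k q j"
      using Suc by (simp add: distrib_right fps_X_mult_nth mult.assoc)
    have "gg k q (Suc j) + gg k q j = rr k q (Suc j) + k * rr k q j"
    proof (cases "even j")
      case True
      then obtain i where i: "j = 2*i" by auto
      show ?thesis unfolding i gg_odd rr_odd rr_even using aux1[OF k1] by simp
    next
      case False
      then obtain i where i: "j = Suc (2*i)" by (metis oddE Suc_eq_plus1)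
      have e: "Suc j = 2*i+2" "Suc (Suc (2*i)) = 2*i+2" unfolding i by simp_all
      have e2: "2*i+2 = 2*(Suc i)" by simp
      have "rr k q (2*i+2) = gg k q (2*i+2) * (1 + k * q^(2*i+2)) / (1 + k)"
        unfolding e2 rr_even ..
      then show ?thesis unfolding e i gg_odd rr_odd using aux2[OF k1 gg_rec[OF qm, of k i]]
        by simp
    qed
    then show ?thesis using L R by simp
  qed
qed

lemma split_sum: "(\<Sum>i=0..2*n. f i) = f n + (\<Sum>j=1..n. f (n+j) + f (n-j))"
  for f :: "nat \<Rightarrow> 'a::comm_monoid_add"
proof (induction n arbitrary: f)
  case 0 then show ?case by simp
next
  case (Suc n)
  have e: "2 * Suc n = Suc (Suc (2*n))" by simp
  have "(\<Sum>i=0..2*Suc n. f i) = f 0 + (\<Sum>i=0..2*n. f (Suc i)) + f (Suc (Suc (2*n)))"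
    by (subst e, subst sum.atLeast0_atMost_Suc, subst sum.atLeast0_atMost_Suc_shift, simp only: o_def)
  also have "\<dots> = f 0 + (f (Suc n) + (\<Sum>j=1..n. f (Suc n+j) + f (Suc (n-j)))) + f (Suc (Suc (2*n)))"
    using Suc[of "\<lambda>i. f (Suc i)"] by simp
  also have "(\<Sum>j=1..n. f (Suc n+j) + f (Suc (n-j))) = (\<Sum>j=1..n. f (Suc n+j) + f (Suc n-j))"
    by (rule sum.cong) (auto simp: Suc_diff_le)
  also have "(\<Sum>j=1..Suc n. f (Suc n+j) + f (Suc n-j)) = (\<Sum>j=1..n. f (Suc n+j) + f (Suc n-j)) + (f (Suc (Suc (2*n))) + f 0)"
    by (simp add: sum.cl_ivl_Suc mult_2)
  ultimately show ?case by (simp add: ac_simps)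
qed

lemma E_eq:
  fixes q k :: complex
  assumes qm: "\<And>m::nat. m \<ge> 1 \<Longrightarrow> q ^ m \<noteq> 1" and k: "k \<noteq> -1"
  shows "sc (-q) (AA k q) * AA k q = Abs_fps (rr k q)"
proof -
  have "PP k q = (1 + fps_X) * GG k q"
  proof (rule uniq[OF qm P_eq[OF qm] Q_eq[OF qm]])
    show "PP k q $ 0 = ((1 + fps_X) * GG k q) $ 0"
      unfolding PP_def by (simp add: AA_def GG_def cc_def fps_mult_nth_0)
  qed
  then have "(1 + fps_const k * fps_X) * (sc (-q) (AA k q) * AA k q) = (1 + fps_const k * fps_X) * Abs_fps (rr k q)"
    using QR[OF qm k] unfolding PP_def by simp
  moreover have "(1 + fps_const k * fps_X :: complex fps) \<noteq> 0"
  proof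
    assume "(1 + fps_const k * fps_X :: complex fps) = 0"
    then have "(1 + fps_const k * fps_X :: complex fps) $ 0 = 0" by simp
    then show False by simp
  qed
  ultimately show ?thesis by simp
qed

lemma E_coeff:
  fixes q k :: complex
  assumes qm: "\<And>m::nat. m \<ge> 1 \<Longrightarrow> q ^ m \<noteq> 1" and k: "k \<noteq> -1"
  shows "(\<Sum>i=0..N. (-q)^i * cc k q i * cc k q (N - i)) = rr k q N"
proof -
  have "(sc (-q) (AA k q) * AA k q) $ N = rr k q N" using E_eq[OF qm k] by simp
  then show ?thesis by (simp add: fps_mult_nth AA_def mult.assoc)
qed


lemma neg1sq: "((-1::complex)^j) * (-1)^j = 1"
  by (metis power_add power_minus1_even mult_2)
lemma pair_alg: fixes a X s p :: complex assumes "s*s = 1" "p \<noteq> 0"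
  shows "a*X*((s*p)*(s*p)+1) = (a*(s*p))*(X*(s*(inverse p + p)))"
proof -
  have "(a*(s*p))*(X*(s*(inverse p + p))) = a*X*(s*s)*(p*inverse p + p*p)" by (simp add: algebra_simps)
  also have "\<dots> = a*X*(1 + p*p)" using assms by simp
  finally show ?thesis using assms by (simp add: algebra_simps)
qed
lemma beta_alg: fixes s p S N D k :: complex assumes "s*s = 1" "p \<noteq> 0" "D \<noteq> 0" "1+k \<noteq> 0"
  and "(s*p) * S = N / D * Y / (1+k)"
  shows "s * (N * Y) / ((1+k) * p * D) = S"
proof -
  have "S = s * ((s*p)*S) / p" using assms(1,2) by (simp add: field_simps)
  also have "\<dots> = s * (N * Y) / ((1+k) * p * D)" using assms by (simp add: field_simps)
  finally show ?thesis by simp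
qed

theorem mainTheorem8:
  fixes q k :: complex
  assumes "q \<noteq> 0"
    and "\<And>m::nat. m \<ge> 1 \<Longrightarrow> q ^ m \<noteq> 1"
    and "k \<noteq> -1"
  shows "WP_Bailey_pair 1 k q
     (\<lambda>n. if n = 0 then 1 else (-1) ^ n * (inverse (q ^ n) + q ^ n))
     (\<lambda>n. if n = 0 then 1 else
        (-1) ^ n * (qpoch (k^2) (q^2) n * (1 + k * q ^ (2*n))) /
        ((1 + k) * q ^ n * qpoch (q^2) (q^2) n))"
proof -
  note q0 = assms(1) and qm = assms(2) and k = assms(3)
  define al :: "nat \<Rightarrow> complex" where "al = (\<lambda>n. if n = 0 then 1 else (-1) ^ n * (inverse (q ^ n) + q ^ n))"
  define T where "T n j = cc k q (n - j) * cc k q (n + j) * al j" for n j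
  have termT: "(qpoch (k / 1) q (n - j) * qpoch k q (n + j)) /
        (qpoch q q (n - j) * qpoch (1 * q) q (n + j)) * al j = T n j" for n j
    unfolding T_def cc_def by simp
  have key: "(\<Sum>i=0..2*n. (-q)^i * cc k q i * cc k q (2*n - i)) = (-q)^n * (\<Sum>j=0..n. T n j)" for n
  proof -
    define f where "f i = (-q)^i * cc k q i * cc k q (2*n - i)" for i
    have pair: "f (n+j) + f (n-j) = (-q)^n * T n j" if j: "1 \<le> j" "j \<le> n" for j
    proof -
      have a: "2*n - (n+j) = n - j" "2*n - (n-j) = n + j" using j by auto
      have b: "(-q)^n = (-q)^(n-j) * (-q)^j" "(-q)^(n+j) = (-q)^(n-j) * (-q)^j * (-q)^j"
        using j by (simp_all add: power_add[symmetric])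
      have c: "(-q)^j = (-1)^j * q^j" by (rule power_minus)
      have qj: "q^j \<noteq> 0" using q0 by simp
      have alj: "al j = (-1)^j * (inverse (q^j) + q^j)" using j by (simp add: al_def)
      have "f (n+j) + f (n-j) = (-q)^(n-j) * (cc k q (n-j) * cc k q (n+j)) * ((-q)^j * (-q)^j + 1)"
        unfolding f_def a b by (simp add: algebra_simps)
      also have "\<dots> = ((-q)^(n-j) * ((-1)^j * q^j)) * ((cc k q (n-j) * cc k q (n+j)) * ((-1)^j * (inverse (q^j) + q^j)))"
        unfolding c by (rule pair_alg[OF neg1sq qj])
      also have "\<dots> = (-q)^n * T n j"
        unfolding T_def alj b(1) c by (simp add: mult.assoc)
      finally show ?thesis .
    qed
    have "(\<Sum>i=0..2*n. f i) = f n + (\<Sum>j=1..n. f (n+j) + f (n-j))" by (rule split_sum)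
    also have "\<dots> = (-q)^n * T n 0 + (\<Sum>j=1..n. (-q)^n * T n j)"
      using pair by (simp add: f_def T_def al_def mult_2)
    also have "\<dots> = (-q)^n * (\<Sum>j=0..n. T n j)"
      by (simp add: distrib_left sum_distrib_left sum.atLeast_Suc_atMost[of 0 n])
    finally show ?thesis unfolding f_def .
  qed
  have beta: "(-1) ^ n * (qpoch (k^2) (q^2) n * (1 + k * q ^ (2*n))) /
        ((1 + k) * q ^ n * qpoch (q^2) (q^2) n) = (\<Sum>j=0..n. T n j)" for n
  proof -
    have "(-q)^n * (\<Sum>j=0..n. T n j) = rr k q (2*n)"
      using key[of n] E_coeff[OF qm k, of "2*n"] by simp
    also have "\<dots> = qpoch (k^2) (q^2) n / qpoch (q^2) (q^2) n * (1 + k * q^(2*n)) / (1 + k)"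
      by (simp add: rr_even gg_even)
    finally have e: "(-q)^n * (\<Sum>j=0..n. T n j) = qpoch (k^2) (q^2) n / qpoch (q^2) (q^2) n * (1 + k * q^(2*n)) / (1 + k)" .
    have c: "(-q)^n = (-1)^n * q^n" by (rule power_minus)
    have nz: "q^n \<noteq> 0" "qpoch (q^2) (q^2) n \<noteq> 0" "1 + k \<noteq> 0"
      using q0 qpoch_q2_nz[OF qm] k by (auto simp: add_eq_0_iff)
    show ?thesis by (rule beta_alg[OF neg1sq nz(1) nz(2) nz(3) e[unfolded c]])
  qed
  show ?thesis
    unfolding WP_Bailey_pair_def al_def[symmetric]
  proof (intro conjI allI)
    show "al 0 = 1" by (simp add: al_def)
  next
    fix n
    show "(if n = 0 then 1 else (-1) ^ n * (qpoch (k^2) (q^2) n * (1 + k * q ^ (2*n))) /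
        ((1 + k) * q ^ n * qpoch (q^2) (q^2) n)) = (\<Sum>j=0..n.
        (qpoch (k / 1) q (n - j) * qpoch k q (n + j)) /
        (qpoch q q (n - j) * qpoch (1 * q) q (n + j)) * al j)"
      unfolding termT using beta[of n] by (simp add: T_def al_def cc_def)
  qed
qed

end
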